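(* For every $\omega>0$, every eigenvalue $\eta$ of the preconditioned matrix $\mathcal F_\omega^{-1}\mathcal R$ satisfies $$|\eta-1|\le\sigma(\omega),$$ where $\sigma(\omega)<1$. That is, all eigenvalues lie in the closed disk of radius $\sigma(\omega)$ centered at $1$.
   Context: Let $M\ge 1$ be an integer and let $I$ denote an identity matrix of the appropriate size. Let $T\in\mathbb R^{M\times M}$ be real symmetric positive definite, with spectrum $\lambda(T)$. Let $D\in\mathbb R^{M\times M}$ be diagonal with nonnegative diagonal entries. Define the block matrices in $\mathbb R^{2M\times 2M}$: $$\mathcal R=\begin{bmatrix} I & T-D\\ D-T & I\end{bmatrix},\qquad \mathcal T=\begin{bmatrix} I & T\\ -T & I\end{bmatrix},\qquad \mathcal D=\begin{bmatrix} 0 & -D\\ D & 0\end{bmatrix}.$$ Thus $\mathcal R=\mathcal T+\mathcal D$. For $\omega>0$, the NASS preconditioner is $$\mathcal F_\omega=\tfrac{1}{2\omega}(\omega I+\mathcal T)(\omega I+\mathcal D).$$ Also define $$\sigma(\omega)=\max_{\lambda\in\lambda(T)}\sqrt{\frac{(\omega-1)^2+\lambda^2}{(\omega+1)^2+\lambda^2}} .$$ *)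

theory Defs
  imports "Jordan_Normal_Form.Matrix" "Jordan_Normal_Form.Char_Poly"
begin

definition sym_pos_def_mat :: "nat \<Rightarrow> real mat \<Rightarrow> bool" where
  "sym_pos_def_mat n T \<longleftrightarrow> T \<in> carrier_mat n n \<and> transpose_mat T = T \<and>
     (\<forall>v \<in> carrier_vec n. v \<noteq> 0\<^sub>v n \<longrightarrow> v \<bullet> (T *\<^sub>v v) > 0)"

(* the inverse of a square matrix (meaningful when it is invertible) *)
definition mat_inv :: "nat \<Rightarrow> real mat \<Rightarrow> real mat" where
  "mat_inv n A = (SOME B. B \<in> carrier_mat n n \<and> A * B = 1\<^sub>m n \<and> B * A = 1\<^sub>m n)"

definition spectrum_real :: "real mat \<Rightarrow> real set" where
  "spectrum_real T = {l. eigenvalue T l}"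

definition blkR :: "nat \<Rightarrow> real mat \<Rightarrow> real mat \<Rightarrow> real mat" where
  "blkR M T D = four_block_mat (1\<^sub>m M) (T - D) (D - T) (1\<^sub>m M)"

definition blkT :: "nat \<Rightarrow> real mat \<Rightarrow> real mat" where
  "blkT M T = four_block_mat (1\<^sub>m M) T (- T) (1\<^sub>m M)"

definition blkD :: "nat \<Rightarrow> real mat \<Rightarrow> real mat" where
  "blkD M D = four_block_mat (0\<^sub>m M M) (- D) D (0\<^sub>m M M)"

definition NASS :: "nat \<Rightarrow> real mat \<Rightarrow> real mat \<Rightarrow> real \<Rightarrow> real mat" where
  "NASS M T D \<omega> = (1 / (2 * \<omega>)) \<cdot>\<^sub>m
     ((\<omega> \<cdot>\<^sub>m 1\<^sub>m (2*M) + blkT M T) * (\<omega> \<cdot>\<^sub>m 1\<^sub>m (2*M) + blkD M D))"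

definition sigma :: "real mat \<Rightarrow> real \<Rightarrow> real" where
  "sigma T \<omega> = Max ((\<lambda>l. sqrt (((\<omega> - 1)^2 + l^2) / ((\<omega> + 1)^2 + l^2))) ` spectrum_real T)"

end

theory Submission
  imports Defs "HOL-Analysis.Function_Topology"
begin


lemma compact_box:
  fixes M :: nat
  shows "compact (PiE UNIV (\<lambda>i. if i < M then {-1..1} else {0::real}))"
proof -
  have "compactin (product_topology (\<lambda>i. euclidean) UNIV) (PiE UNIV (\<lambda>i. if i < M then {-1..1} else {0::real}))"
    by (subst compactin_PiE) (auto simp: compactin_euclidean_iff)
  then show ?thesis by (simp add: euclidean_product_topology)
qed

lemma cont_coord: "continuous_on S (\<lambda>x::nat\<Rightarrow>real. x i)"
  by (rule continuous_on_subset[OF continuous_on_product_coordinates]) auto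

lemma sym_swap:
  fixes t :: "nat \<Rightarrow> nat \<Rightarrow> real"
  assumes sym: "\<forall>i<M. \<forall>j<M. t i j = t j i"
  shows "(\<Sum>i<M. (\<Sum>j<M. t i j * p j) * (\<Sum>k<M. t i k * h k))
       = (\<Sum>k<M. h k * (\<Sum>i<M. t k i * (\<Sum>j<M. t i j * p j)))"
proof -
  have "(\<Sum>i<M. (\<Sum>j<M. t i j * p j) * (\<Sum>k<M. t i k * h k))
      = (\<Sum>i<M. \<Sum>k<M. (\<Sum>j<M. t i j * p j) * (t i k * h k))"
    by (simp add: sum_distrib_left)
  also have "\<dots> = (\<Sum>k<M. \<Sum>i<M. (\<Sum>j<M. t i j * p j) * (t i k * h k))"
    by (rule sum.swap)
  also have "\<dots> = (\<Sum>k<M. \<Sum>i<M. h k * (t k i * (\<Sum>j<M. t i j * p j)))"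
    using sym by (intro sum.cong refl) (auto simp: mult_ac)
  also have "\<dots> = (\<Sum>k<M. h k * (\<Sum>i<M. t k i * (\<Sum>j<M. t i j * p j)))"
    by (simp add: sum_distrib_left)
  finally show ?thesis .
qed

lemma spec_bound:
  fixes t :: "nat \<Rightarrow> nat \<Rightarrow> real"
  assumes sym: "\<forall>i<M. \<forall>j<M. t i j = t j i" and M: "M \<ge> 1"
  shows "\<exists>l p. (\<forall>i<M. (\<Sum>j<M. t i j * p j) = l * p i) \<and> (\<exists>i<M. p i \<noteq> 0) \<and>
     (\<forall>q. (\<Sum>i<M. (\<Sum>j<M. t i j * q j)^2) \<le> l^2 * (\<Sum>j<M. (q j)^2))"
proof -
  define Tf where "Tf q i = (\<Sum>j<M. t i j * q j)" for q :: "nat \<Rightarrow> real" and i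
  define g where "g q = (\<Sum>i<M. (Tf q i)^2)" for q
  define nn where "nn q = (\<Sum>j<M. (q j)^2)" for q :: "nat \<Rightarrow> real"
  define B where "B = PiE UNIV (\<lambda>i. if i < M then {-1..1} else {0::real})"
  define S where "S = B \<inter> {q. nn q = 1}"
  have cS: "compact S" unfolding S_def B_def
    by (intro compact_Int_closed compact_box closed_Collect_eq)
       (auto simp: nn_def intro!: continuous_intros cont_coord)
  have e1: "(\<Sum>j<M. (if j = 0 then 1 else 0::real)^2) = 1"
  proof -
    have "(\<Sum>j<M. (if j = 0 then 1 else 0::real)^2) = (\<Sum>j<M. if j = 0 then 1 else 0::real)"
      by (intro sum.cong) auto
    also have "\<dots> = 1" using M by (simp add: sum.delta)
    finally show ?thesis .
  qed
  have "(\<lambda>i. if i = 0 then 1 else 0::real) \<in> S"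
    using M e1 by (auto simp: S_def B_def nn_def PiE_def extensional_def)
  then have Sne: "S \<noteq> {}" by auto
  have cg: "continuous_on S g" unfolding g_def Tf_def
    by (intro continuous_intros cont_coord)
  obtain p where pS: "p \<in> S" and pmax: "\<And>q. q \<in> S \<Longrightarrow> g q \<le> g p"
    using continuous_attains_sup[OF cS Sne cg] by blast
  define L where "L = g p"
  have np: "nn p = 1" using pS by (auto simp: S_def)
  have g_nonneg: "g q \<ge> 0" for q unfolding g_def by (intro sum_nonneg) auto
  have nn_nonneg: "nn q \<ge> 0" for q unfolding nn_def by (intro sum_nonneg) auto
  have Tf_lin: "Tf (\<lambda>j. a * q j + b * r j) i = a * Tf q i + b * Tf r i" for a b q r i
    unfolding Tf_def by (simp add: sum.distrib sum_distrib_left algebra_simps)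
  have Tf_scale: "Tf (\<lambda>j. a * q j) i = a * Tf q i" for a q i
    unfolding Tf_def by (simp add: sum_distrib_left algebra_simps)
  have bound: "g q \<le> L * nn q" for q
  proof (cases "nn q = 0")
    case True
    then have "\<forall>j<M. (q j)^2 = 0" unfolding nn_def
      by (subst (asm) sum_nonneg_eq_0_iff) auto
    then have "\<forall>i. Tf q i = 0" unfolding Tf_def by simp
    then show ?thesis using True by (simp add: g_def)
  next
    case False
    then have pos: "nn q > 0" using nn_nonneg[of q] by linarith
    define r where "r = sqrt (nn q)"
    have r: "r > 0" "r^2 = nn q" using pos by (auto simp: r_def)
    define q' where "q' i = (if i < M then q i / r else 0)" for i
    have nq': "nn q' = nn q / r^2" unfolding nn_def q'_def
      by (simp add: power_divide sum_divide_distrib)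
    then have nq'1: "nn q' = 1" using r pos by simp
    have "\<bar>q' i\<bar> \<le> 1" for i
    proof (cases "i < M")
      case True
      have "(q' i)^2 \<le> nn q'" unfolding nn_def
        by (rule member_le_sum[where f = "\<lambda>j. (q' j)^2"]) (use True in auto)
      then have "(q' i)^2 \<le> 1^2" using nq'1 by simp
      then show ?thesis using abs_le_square_iff[of "q' i" 1] by simp
    qed (simp add: q'_def)
    then have "q' \<in> S" using nq'1 unfolding S_def B_def PiE_def extensional_def
      by (auto simp: abs_le_iff) (auto simp: q'_def)
    then have "g q' \<le> L" using pmax L_def by blast
    moreover have "g q' = g q / r^2"
    proof -
      have "Tf q' i = Tf q i / r" for i
        unfolding Tf_def q'_def by (simp add: sum_divide_distrib)
      then show ?thesis unfolding g_def by (simp add: power_divide sum_divide_distrib)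
    qed
    ultimately have "g q / nn q \<le> L" using r by simp
    then show ?thesis using pos by (simp add: divide_le_eq mult.commute)
  qed
  define h where "h i = Tf (Tf p) i - L * p i" for i
  have h0: "\<forall>i<M. h i = 0"
  proof (rule ccontr)
    assume "\<not> ?thesis"
    then obtain i0 where i0: "i0 < M" "h i0 \<noteq> 0" by auto
    have "(h i0)^2 \<le> nn h" unfolding nn_def
      by (rule member_le_sum[where f = "\<lambda>j. (h j)^2"]) (use i0 in auto)
    then have nh: "nn h > 0" using i0 by (smt (verit) zero_less_power2)
    define K where "K = L * nn h - g h"
    have K: "K \<ge> 0" using bound[of h] by (simp add: K_def)
    define e where "e = nn h / (K + 1)"
    have e: "e > 0" using nh K by (simp add: e_def)
    have b: "g (\<lambda>j. 1 * p j + e * h j) \<le> L * nn (\<lambda>j. 1 * p j + e * h j)" by (rule bound)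
    have cross: "(\<Sum>i<M. Tf p i * Tf h i) = (\<Sum>k<M. h k * Tf (Tf p) k)"
      unfolding Tf_def by (rule sym_swap[OF sym])
    have g_exp: "g (\<lambda>j. 1 * p j + e * h j) = g p + 2 * e * (\<Sum>i<M. Tf p i * Tf h i) + e^2 * g h"
      unfolding g_def Tf_lin
      by (simp add: power2_sum sum.distrib sum_distrib_left algebra_simps power_mult_distrib)
    have n_exp: "nn (\<lambda>j. 1 * p j + e * h j) = nn p + 2 * e * (\<Sum>k<M. p k * h k) + e^2 * nn h"
      unfolding nn_def
      by (simp add: power2_sum sum.distrib sum_distrib_left algebra_simps power_mult_distrib)
    have key: "(\<Sum>k<M. h k * Tf (Tf p) k) - L * (\<Sum>k<M. p k * h k) = nn h"
    proof -
      have "(\<Sum>k<M. h k * Tf (Tf p) k) - L * (\<Sum>k<M. p k * h k) = (\<Sum>k<M. h k * h k)"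
        unfolding h_def by (simp add: sum_distrib_left sum_subtractf[symmetric] algebra_simps)
      then show ?thesis by (simp add: nn_def power2_eq_square)
    qed
    from b have "g p + 2 * e * (\<Sum>k<M. h k * Tf (Tf p) k) + e^2 * g h
        \<le> L * (nn p + 2 * e * (\<Sum>k<M. p k * h k) + e^2 * nn h)"
      using g_exp n_exp cross by simp
    then have "2 * e * ((\<Sum>k<M. h k * Tf (Tf p) k) - L * (\<Sum>k<M. p k * h k)) \<le> e^2 * K"
      using np L_def by (simp add: K_def algebra_simps)
    then have "2 * e * nn h \<le> e * (e * K)" using key by (simp add: power2_eq_square)
    then have "2 * nn h \<le> e * K" using e by simp
    moreover have "e * K < nn h"
    proof -
      have "e * K = nn h * (K / (K+1))" by (simp add: e_def)
      also have "\<dots> < nn h * 1" using nh K by (intro mult_strict_left_mono) auto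
      finally show ?thesis by simp
    qed
    ultimately show False using nh by linarith
  qed
  have L0: "L \<ge> 0" using g_nonneg L_def by simp
  define lam where "lam = sqrt L"
  have lam2: "lam^2 = L" using L0 by (simp add: lam_def)
  have TT: "\<forall>i<M. Tf (Tf p) i = L * p i" using h0 by (simp add: h_def)
  have pne: "\<exists>i<M. p i \<noteq> 0"
  proof (rule ccontr)
    assume "\<not> ?thesis"
    then have "nn p = 0" unfolding nn_def by simp
    then show False using np by simp
  qed
  define y where "y i = Tf p i + lam * p i" for i
  show ?thesis
  proof (cases "\<forall>i<M. y i = 0")
    case True
    then have "\<forall>i<M. Tf p i = (-lam) * p i" by (auto simp: y_def)
    then show ?thesis using pne bound lam2 unfolding Tf_def g_def nn_def L_def
      by (intro exI[of _ "-lam"] exI[of _ p]) auto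
  next
    case False
    have Tfy: "Tf y i = Tf (Tf p) i + lam * Tf p i" for i
      unfolding y_def using Tf_lin[of 1 "Tf p" lam p i] by simp
    have "\<forall>i<M. Tf y i = lam * y i"
      using TT lam2 by (auto simp: Tfy y_def power2_eq_square algebra_simps)
    then show ?thesis using False bound lam2 unfolding Tf_def g_def nn_def L_def
      by (intro exI[of _ lam] exI[of _ y]) auto
  qed
qed


abbreviation cm :: "real mat \<Rightarrow> complex mat" where "cm A \<equiv> map_mat complex_of_real A"

definition nsq :: "complex Matrix.vec \<Rightarrow> real" where
  "nsq x = (\<Sum>i<dim_vec x. (cmod (x$i))^2)"

lemma cmv_idx:
  assumes "A \<in> carrier_mat n m" "dim_vec x = m" "i < n"
  shows "(cm A *\<^sub>v x) $ i = (\<Sum>j<m. of_real (A$$(i,j)) * x$j)"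
  using assms by (auto simp: scalar_prod_def atLeast0LessThan intro!: sum.cong)

lemma cmv_carrier[simp]: "A \<in> carrier_mat n m \<Longrightarrow> cm A *\<^sub>v x \<in> carrier_vec n"
  unfolding carrier_vec_def carrier_mat_def by simp

lemma cmv_lin:
  assumes A: "A \<in> carrier_mat n m" and x: "x \<in> carrier_vec m" and y: "y \<in> carrier_vec m"
  shows "cm A *\<^sub>v (a \<cdot>\<^sub>v x + b \<cdot>\<^sub>v y) = a \<cdot>\<^sub>v (cm A *\<^sub>v x) + b \<cdot>\<^sub>v (cm A *\<^sub>v y)"
proof (rule eq_vecI)
  fix i assume "i < dim_vec (a \<cdot>\<^sub>v (cm A *\<^sub>v x) + b \<cdot>\<^sub>v (cm A *\<^sub>v y))"
  then have i: "i < n" using A by auto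
  show "(cm A *\<^sub>v (a \<cdot>\<^sub>v x + b \<cdot>\<^sub>v y)) $ i = (a \<cdot>\<^sub>v (cm A *\<^sub>v x) + b \<cdot>\<^sub>v (cm A *\<^sub>v y)) $ i"
    using A x y i
    by (simp add: cmv_idx[OF A] sum.distrib sum_distrib_left algebra_simps cong: sum.cong)
qed (use A in auto)

lemma nsq_nonneg: "nsq x \<ge> 0"
  unfolding nsq_def by (intro sum_nonneg) auto

lemma nsq_zero:
  assumes "x \<in> carrier_vec n" "nsq x = 0"
  shows "x = 0\<^sub>v n"
proof -
  have "\<forall>i<dim_vec x. (cmod (x$i))^2 = 0" using assms(2) unfolding nsq_def
    by (subst (asm) sum_nonneg_eq_0_iff) auto
  then show ?thesis using assms(1) by (intro eq_vecI) auto
qed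

lemma nsq_smult: "nsq (a \<cdot>\<^sub>v x) = (cmod a)^2 * nsq x"
  unfolding nsq_def by (simp add: norm_mult power_mult_distrib sum_distrib_left)

lemma cm2: "(cmod (complex_of_real a * p + complex_of_real b * q))^2
   = a^2 * (cmod p)^2 + b^2 * (cmod q)^2 + 2*a*b * (Re p * Re q + Im p * Im q)"
proof -
  have "(cmod (complex_of_real a * p + complex_of_real b * q))^2
     = (a * Re p + b * Re q)^2 + (a * Im p + b * Im q)^2"
    by (simp add: cmod_power2)
  also have "\<dots> = a^2 * (cmod p)^2 + b^2 * (cmod q)^2 + 2*a*b * (Re p * Re q + Im p * Im q)"
    unfolding cmod_power2 by (simp add: power2_eq_square algebra_simps)
  finally show ?thesis .
qed

lemma skew_nsq:
  assumes K: "K \<in> carrier_mat n n" and skew: "\<forall>i<n. \<forall>j<n. K$$(i,j) = - K$$(j,i)"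
    and x: "x \<in> carrier_vec n"
  shows "nsq (of_real a \<cdot>\<^sub>v x + of_real b \<cdot>\<^sub>v (cm K *\<^sub>v x)) = a^2 * nsq x + b^2 * nsq (cm K *\<^sub>v x)"
proof -
  define y where "y = cm K *\<^sub>v x"
  have y: "y \<in> carrier_vec n" using K by (simp add: y_def)
  have yi: "y $ i = (\<Sum>j<n. of_real (K$$(i,j)) * x$j)" if "i < n" for i
    unfolding y_def using cmv_idx[OF K] x that by simp
  define z where "z = (\<Sum>i<n. cnj (x$i) * y$i)"
  have z1: "z = (\<Sum>i<n. \<Sum>j<n. cnj (x$i) * of_real (K$$(i,j)) * x$j)"
    unfolding z_def by (simp add: yi sum_distrib_left mult.assoc)
  have "cnj z = (\<Sum>i<n. \<Sum>j<n. x$i * of_real (K$$(i,j)) * cnj (x$j))"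
    unfolding z1 by (simp add: cnj_sum mult.assoc)
  also have "\<dots> = (\<Sum>j<n. \<Sum>i<n. x$i * of_real (K$$(i,j)) * cnj (x$j))"
    by (rule sum.swap)
  also have "\<dots> = (\<Sum>j<n. \<Sum>i<n. - (cnj (x$j) * of_real (K$$(j,i)) * x$i))"
  proof (intro sum.cong refl)
    fix j i assume "j \<in> {..<n}" "i \<in> {..<n}"
    then have "K$$(i,j) = - K$$(j,i)" using skew by blast
    then show "x$i * of_real (K$$(i,j)) * cnj (x$j) = - (cnj (x$j) * of_real (K$$(j,i)) * x$i)"
      by (simp add: mult_ac)
  qed
  also have "\<dots> = - z" unfolding z1 by (simp add: sum_negf)
  finally have "cnj z = - z" .
  then have "Re (cnj z) = Re (- z)" by simp
  then have Rez: "Re z = 0" by simp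
  have Rez': "(\<Sum>i<n. Re (x$i) * Re (y$i) + Im (x$i) * Im (y$i)) = 0"
    using Rez unfolding z_def by (simp add: Re_sum)
  have "nsq (of_real a \<cdot>\<^sub>v x + of_real b \<cdot>\<^sub>v y)
     = (\<Sum>i<n. a^2 * (cmod (x$i))^2 + b^2 * (cmod (y$i))^2 + 2*a*b * (Re (x$i) * Re (y$i) + Im (x$i) * Im (y$i)))"
    unfolding nsq_def using x y by (simp add: cm2)
  also have "\<dots> = a^2 * nsq x + b^2 * nsq y + 2*a*b * (\<Sum>i<n. Re (x$i) * Re (y$i) + Im (x$i) * Im (y$i))"
    unfolding nsq_def using x y by (simp add: sum.distrib flip: sum_distrib_left)
  finally show ?thesis using Rez' by (simp add: y_def)
qed

lemma sum_split2: "(\<Sum>j<M+M. f j) = (\<Sum>j<M. f j) + (\<Sum>j<M. f (j+M::nat))"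
proof -
  have "(\<Sum>j<M+M. f j) = (\<Sum>j<M. f j) + (\<Sum>j\<in>{M..<M+M}. f j)"
    by (metis add.commute le_add1 lessThan_atLeast0 sum.atLeastLessThan_concat zero_le)
  also have "(\<Sum>j\<in>{M..<M+M}. f j) = (\<Sum>j<M. f (j+M))"
    using sum.shift_bounds_nat_ivl[of f 0 M M] by (simp add: atLeast0LessThan)
  finally show ?thesis .
qed

lemma cbound:
  fixes T :: "real mat"
  assumes rb: "\<forall>q. (\<Sum>i<M. (\<Sum>j<M. T$$(i,j) * q j)^2) \<le> l^2 * (\<Sum>j<M. (q j)^2)"
  shows "(\<Sum>i<M. (cmod (\<Sum>j<M. of_real (T$$(i,j)) * w j))^2) \<le> l^2 * (\<Sum>j<M. (cmod (w j))^2)"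
proof -
  have "(\<Sum>i<M. (cmod (\<Sum>j<M. of_real (T$$(i,j)) * w j))^2)
     = (\<Sum>i<M. (\<Sum>j<M. T$$(i,j) * Re (w j))^2) + (\<Sum>i<M. (\<Sum>j<M. T$$(i,j) * Im (w j))^2)"
    by (simp add: cmod_power2 Re_sum Im_sum sum.distrib)
  also have "\<dots> \<le> l^2 * (\<Sum>j<M. (Re (w j))^2) + l^2 * (\<Sum>j<M. (Im (w j))^2)"
    using rb[rule_format, of "\<lambda>j. Re (w j)"] rb[rule_format, of "\<lambda>j. Im (w j)"] by linarith
  also have "\<dots> = l^2 * (\<Sum>j<M. (cmod (w j))^2)"
    by (simp add: cmod_power2 sum.distrib algebra_simps)
  finally show ?thesis .
qed



lemma sum_delta_mult:
  fixes y :: "nat \<Rightarrow> 'a::comm_ring_1"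
  assumes "i < n"
  shows "(\<Sum>j<n. (if i = j then c else 0) * y j) = c * y i"
proof -
  have "(\<Sum>j<n. (if i = j then c else 0) * y j) = (\<Sum>j<n. if i = j then c * y j else 0)"
    by (intro sum.cong) auto
  also have "\<dots> = c * y i" using assms by simp
  finally show ?thesis .
qed

lemma cmv_smult:
  assumes A: "A \<in> carrier_mat n m" and x: "x \<in> carrier_vec m"
  shows "cm A *\<^sub>v (a \<cdot>\<^sub>v x) = a \<cdot>\<^sub>v (cm A *\<^sub>v x)"
  by (rule mult_mat_vec[of _ n m]) (use A x in auto)

lemma cm_aI:
  assumes K: "K \<in> carrier_mat n n" and y: "y \<in> carrier_vec n"
  shows "cm (a \<cdot>\<^sub>m 1\<^sub>m n + K) *\<^sub>v y = of_real a \<cdot>\<^sub>v y + of_real 1 \<cdot>\<^sub>v (cm K *\<^sub>v y)"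
proof (rule eq_vecI)
  fix i assume "i < dim_vec (of_real a \<cdot>\<^sub>v y + of_real 1 \<cdot>\<^sub>v (cm K *\<^sub>v y))"
  then have i: "i < n" using y K by auto
  have C: "a \<cdot>\<^sub>m 1\<^sub>m n + K \<in> carrier_mat n n" using K by auto
  have "(cm (a \<cdot>\<^sub>m 1\<^sub>m n + K) *\<^sub>v y) $ i
      = (\<Sum>j<n. of_real ((a \<cdot>\<^sub>m 1\<^sub>m n + K) $$ (i,j)) * y$j)"
    using cmv_idx[OF C] y i by simp
  also have "\<dots> = (\<Sum>j<n. (if i = j then of_real a else 0) * y$j + of_real (K$$(i,j)) * y$j)"
    using K i by (intro sum.cong refl) (auto simp: distrib_right)
  also have "\<dots> = of_real a * y$i + (\<Sum>j<n. of_real (K$$(i,j)) * y$j)"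
    by (simp add: sum.distrib sum_delta_mult[OF i])
  also have "\<dots> = (of_real a \<cdot>\<^sub>v y + of_real 1 \<cdot>\<^sub>v (cm K *\<^sub>v y)) $ i"
    using cmv_idx[OF K] y i K by simp
  finally show "(cm (a \<cdot>\<^sub>m 1\<^sub>m n + K) *\<^sub>v y) $ i = (of_real a \<cdot>\<^sub>v y + of_real 1 \<cdot>\<^sub>v (cm K *\<^sub>v y)) $ i" .
qed (use K y in auto)

lemma cm_smult_mv:
  assumes A: "A \<in> carrier_mat n m" and x: "x \<in> carrier_vec m"
  shows "cm (c \<cdot>\<^sub>m A) *\<^sub>v x = of_real c \<cdot>\<^sub>v (cm A *\<^sub>v x)"
proof (rule eq_vecI)
  fix i assume "i < dim_vec (of_real c \<cdot>\<^sub>v (cm A *\<^sub>v x))"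
  then have i: "i < n" using A by auto
  have C: "c \<cdot>\<^sub>m A \<in> carrier_mat n m" using A by auto
  show "(cm (c \<cdot>\<^sub>m A) *\<^sub>v x) $ i = (of_real c \<cdot>\<^sub>v (cm A *\<^sub>v x)) $ i"
    using cmv_idx[OF C] cmv_idx[OF A] x i A by (simp add: sum_distrib_left mult.assoc)
qed (use A in auto)

lemma inv_exists:
  assumes A: "(A :: 'a :: field mat) \<in> carrier_mat n n" and inj: "\<And>v. v \<in> carrier_vec n \<Longrightarrow> A *\<^sub>v v = 0\<^sub>v n \<Longrightarrow> v = 0\<^sub>v n"
  shows "\<exists>B. B \<in> carrier_mat n n \<and> A * B = 1\<^sub>m n \<and> B * A = 1\<^sub>m n"
proof -
  have "Determinant.det A \<noteq> 0" using det_0_iff_vec_prod_zero[OF A] inj by blast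
  from det_non_zero_imp_unit[OF A this, of "()"]
  show ?thesis unfolding Units_def ring_mat_def by auto
qed

lemma final_arith:
  fixes w n s L m2 :: real
  assumes w: "w > 0" and n: "n \<ge> 0" and s: "s \<ge> 0" and sL: "s \<le> L * n" and L: "L \<ge> 0"
    and Bp: "(w+1)^2 * n + s > 0" and eq: "m2 * ((w+1)^2 * n + s) = (w-1)^2 * n + s"
  shows "m2 \<le> ((w-1)^2 + L) / ((w+1)^2 + L)"
proof -
  have m2: "m2 = ((w-1)^2 * n + s) / ((w+1)^2 * n + s)" using eq Bp by (simp add: eq_divide_eq)
  have d: "((w+1)^2*n+s)*((w-1)^2+L) - ((w-1)^2*n+s)*((w+1)^2+L) = 4*w*(L*n - s)"
    by (simp add: power2_eq_square algebra_simps)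
  have "4*w*(L*n - s) \<ge> 0" using w sL by simp
  then have "((w-1)^2*n+s)*((w+1)^2+L) \<le> ((w-1)^2+L) * ((w+1)^2*n+s)" using d by (simp add: algebra_simps)
  moreover have "(w+1)^2 + L > 0"
  proof -
    have "(w+1)^2 > 0" using w by simp
    then show ?thesis using L by linarith
  qed
  ultimately show ?thesis unfolding m2 using Bp by (simp add: divide_le_eq le_divide_eq mult.commute)
qed

lemma sym_entries:
  assumes "sym_pos_def_mat M T"
  shows "T \<in> carrier_mat M M" "\<forall>i<M. \<forall>j<M. T$$(i,j) = T$$(j,i)"
proof -
  show T: "T \<in> carrier_mat M M" using assms by (simp add: sym_pos_def_mat_def)
  have tr: "transpose_mat T = T" using assms by (simp add: sym_pos_def_mat_def)
  show "\<forall>i<M. \<forall>j<M. T$$(i,j) = T$$(j,i)"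
  proof (intro allI impI)
    fix i j assume "i < M" "j < M"
    then have "transpose_mat T $$ (i,j) = T $$ (j,i)" using T by auto
    then show "T$$(i,j) = T$$(j,i)" using tr by simp
  qed
qed

lemma eig_exists:
  assumes M: "M \<ge> 1" and T: "T \<in> carrier_mat M M" and sym: "\<forall>i<M. \<forall>j<M. T$$(i,j) = T$$(j,i)"
  shows "\<exists>l \<in> spectrum_real T. \<forall>q. (\<Sum>i<M. (\<Sum>j<M. T$$(i,j) * q j)^2) \<le> l^2 * (\<Sum>j<M. (q j)^2)"
proof -
  obtain l p where ev: "\<forall>i<M. (\<Sum>j<M. T$$(i,j) * p j) = l * p i" and pne: "\<exists>i<M. p i \<noteq> 0"
    and rb: "\<forall>q. (\<Sum>i<M. (\<Sum>j<M. T$$(i,j) * q j)^2) \<le> l^2 * (\<Sum>j<M. (q j)^2)"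
    using spec_bound[of M "\<lambda>i j. T$$(i,j)", OF sym M] by blast
  define v where "v = Matrix.vec M p"
  have v: "v \<in> carrier_vec M" by (simp add: v_def)
  have vne: "v \<noteq> 0\<^sub>v M"
  proof
    assume "v = 0\<^sub>v M"
    then have "\<forall>i<M. p i = 0" unfolding v_def by (metis index_vec index_zero_vec(1))
    then show False using pne by auto
  qed
  have "T *\<^sub>v v = l \<cdot>\<^sub>v v"
  proof (rule eq_vecI)
    fix i assume "i < dim_vec (l \<cdot>\<^sub>v v)"
    then have i: "i < M" by (simp add: v_def)
    have "(T *\<^sub>v v) $ i = (\<Sum>j\<in>{0..<M}. T$$(i,j) * p j)"
      using T i by (simp add: v_def scalar_prod_def)
    also have "\<dots> = l * p i" using ev i by (simp add: atLeast0LessThan)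
    finally show "(T *\<^sub>v v) $ i = (l \<cdot>\<^sub>v v) $ i" using i by (simp add: v_def)
  qed (use T in \<open>simp add: v_def\<close>)
  then have "eigenvector T v l" using v vne T by (simp add: eigenvector_def)
  then have "l \<in> spectrum_real T" by (auto simp: spectrum_real_def eigenvalue_def)
  then show ?thesis using rb by blast
qed

lemma fin_spec:
  assumes T: "T \<in> carrier_mat M M"
  shows "finite (spectrum_real T)"
proof -
  have "spectrum_real T = {x. poly (char_poly T) x = 0}"
    unfolding spectrum_real_def using eigenvalue_root_char_poly[OF T] by auto
  moreover have "char_poly T \<noteq> 0"
    using degree_monic_char_poly[OF T] by auto
  ultimately show ?thesis using poly_roots_finite by simp
qed

lemma Sk_bound:
  assumes T: "T \<in> carrier_mat M M"
    and rb: "\<forall>q. (\<Sum>i<M. (\<Sum>j<M. T$$(i,j) * q j)^2) \<le> l^2 * (\<Sum>j<M. (q j)^2)"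
    and x: "x \<in> carrier_vec (M+M)"
  shows "nsq (cm (four_block_mat (0\<^sub>m M M) T (-T) (0\<^sub>m M M)) *\<^sub>v x) \<le> l^2 * nsq x"
proof -
  define S where "S = four_block_mat (0\<^sub>m M M) T (-T) (0\<^sub>m M M)"
  have S: "S \<in> carrier_mat (M+M) (M+M)" using T by (simp add: S_def)
  have Sij: "S$$(i,j) = (if i < M then if j < M then 0 else T$$(i,j-M) else if j < M then - T$$(i-M,j) else 0)"
    if "i < M+M" "j < M+M" for i j using that T by (simp add: S_def)
  have top: "(cm S *\<^sub>v x)$i = (\<Sum>j<M. of_real (T$$(i,j)) * x$(j+M))" if i: "i < M" for i
  proof -
    have "(cm S *\<^sub>v x)$i = (\<Sum>j<M+M. of_real (S$$(i,j)) * x$j)"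
      using cmv_idx[OF S] x i by simp
    also have "\<dots> = (\<Sum>j<M. of_real (S$$(i,j)) * x$j) + (\<Sum>j<M. of_real (S$$(i,j+M)) * x$(j+M))"
      by (rule sum_split2)
    also have "(\<Sum>j<M. of_real (S$$(i,j)) * x$j) = 0"
      using i by (intro sum.neutral) (auto simp: Sij)
    also have "(\<Sum>j<M. of_real (S$$(i,j+M)) * x$(j+M)) = (\<Sum>j<M. of_real (T$$(i,j)) * x$(j+M))"
      using i by (intro sum.cong refl) (auto simp: Sij)
    finally show ?thesis by simp
  qed
  have bot: "(cm S *\<^sub>v x)$(i+M) = - (\<Sum>j<M. of_real (T$$(i,j)) * x$j)" if i: "i < M" for i
  proof -
    have "(cm S *\<^sub>v x)$(i+M) = (\<Sum>j<M+M. of_real (S$$(i+M,j)) * x$j)"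
      using cmv_idx[OF S] x i by simp
    also have "\<dots> = (\<Sum>j<M. of_real (S$$(i+M,j)) * x$j) + (\<Sum>j<M. of_real (S$$(i+M,j+M)) * x$(j+M))"
      by (rule sum_split2)
    also have "(\<Sum>j<M. of_real (S$$(i+M,j+M)) * x$(j+M)) = 0"
      using i by (intro sum.neutral) (auto simp: Sij)
    also have "(\<Sum>j<M. of_real (S$$(i+M,j)) * x$j) = (\<Sum>j<M. - (of_real (T$$(i,j)) * x$j))"
      using i by (intro sum.cong refl) (auto simp: Sij)
    finally show ?thesis by (simp add: sum_negf)
  qed
  have "nsq (cm S *\<^sub>v x) = (\<Sum>i<M+M. (cmod ((cm S *\<^sub>v x)$i))^2)"
    using S by (simp add: nsq_def)
  also have "\<dots> = (\<Sum>i<M. (cmod ((cm S *\<^sub>v x)$i))^2) + (\<Sum>i<M. (cmod ((cm S *\<^sub>v x)$(i+M)))^2)"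
    by (rule sum_split2)
  also have "\<dots> = (\<Sum>i<M. (cmod (\<Sum>j<M. of_real (T$$(i,j)) * x$(j+M)))^2)
                 + (\<Sum>i<M. (cmod (\<Sum>j<M. of_real (T$$(i,j)) * x$j))^2)"
    by (simp add: top bot)
  also have "\<dots> \<le> l^2 * (\<Sum>j<M. (cmod (x$(j+M)))^2) + l^2 * (\<Sum>j<M. (cmod (x$j))^2)"
    using cbound[OF rb, of "\<lambda>j. x$(j+M)"] cbound[OF rb, of "\<lambda>j. x$j"] by linarith
  also have "\<dots> = l^2 * nsq x"
    using x sum_split2[of "\<lambda>j. (cmod (x$j))^2" M] by (simp add: nsq_def algebra_simps)
  finally show ?thesis by (simp add: S_def)
qed

theorem theorem4p1:
  fixes M :: nat and T D :: "real mat" and \<omega> :: real and \<eta> :: complex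
  assumes "M \<ge> 1"
    and "sym_pos_def_mat M T"
    and "D \<in> carrier_mat M M" and "diagonal_mat D" and "\<forall>i < M. D $$ (i, i) \<ge> 0"
    and "\<omega> > 0"
    and "eigenvalue (map_mat complex_of_real (mat_inv (2*M) (NASS M T D \<omega>) * blkR M T D)) \<eta>"
  shows "cmod (\<eta> - 1) \<le> sigma T \<omega> \<and> sigma T \<omega> < 1"
proof -
  note M1 = assms(1) and Dc = assms(3) and Ddiag = assms(4) and w = assms(6) and eig = assms(7)
  have Tc: "T \<in> carrier_mat M M" and Tsym: "\<forall>i<M. \<forall>j<M. T$$(i,j) = T$$(j,i)"
    using sym_entries[OF assms(2)] by auto
  define N where "N = M + M"
  have N2: "2 * M = N" by (simp add: N_def)
  define Sk where "Sk = four_block_mat (0\<^sub>m M M) T (-T) (0\<^sub>m M M)"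
  define Dk where "Dk = blkD M D"
  have Skc: "Sk \<in> carrier_mat N N" using Tc by (simp add: Sk_def N_def)
  have Dkc: "Dk \<in> carrier_mat N N" using Dc by (simp add: Dk_def blkD_def N_def)
  have Sk_skew: "\<forall>i<N. \<forall>j<N. Sk$$(i,j) = - Sk$$(j,i)"
  proof (intro allI impI)
    fix i j assume ij: "i < N" "j < N"
    show "Sk$$(i,j) = - Sk$$(j,i)"
    proof (cases "i < M"; cases "j < M")
      assume "i < M" "\<not> j < M"
      then have "T$$(i,j-M) = T$$(j-M,i)" using Tsym ij by (auto simp: N_def)
      then show ?thesis using ij Tc \<open>i < M\<close> \<open>\<not> j < M\<close> by (simp add: Sk_def N_def)
    next
      assume "\<not> i < M" "j < M"
      then have "T$$(i-M,j) = T$$(j,i-M)" using Tsym ij by (auto simp: N_def)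
      then show ?thesis using ij Tc \<open>\<not> i < M\<close> \<open>j < M\<close> by (simp add: Sk_def N_def)
    qed (use ij Tc in \<open>auto simp: Sk_def N_def\<close>)
  qed
  have Dk_skew: "\<forall>i<N. \<forall>j<N. Dk$$(i,j) = - Dk$$(j,i)"
  proof (intro allI impI)
    fix i j assume ij: "i < N" "j < N"
    have Dsym: "D$$(a,b) = D$$(b,a)" if "a < M" "b < M" for a b
      using Ddiag that Dc by (cases "a = b") (auto simp: diagonal_mat_def)
    show "Dk$$(i,j) = - Dk$$(j,i)"
    proof (cases "i < M"; cases "j < M")
      assume "i < M" "\<not> j < M"
      then have "D$$(i,j-M) = D$$(j-M,i)" using Dsym ij by (auto simp: N_def)
      then show ?thesis using ij Dc \<open>i < M\<close> \<open>\<not> j < M\<close> by (simp add: Dk_def blkD_def N_def)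
    next
      assume "\<not> i < M" "j < M"
      then have "D$$(i-M,j) = D$$(j,i-M)" using Dsym ij by (auto simp: N_def)
      then show ?thesis using ij Dc \<open>\<not> i < M\<close> \<open>j < M\<close> by (simp add: Dk_def blkD_def N_def)
    qed (use ij Dc in \<open>auto simp: Dk_def blkD_def N_def\<close>)
  qed
  obtain l where lspec: "l \<in> spectrum_real T"
    and rb: "\<forall>q. (\<Sum>i<M. (\<Sum>j<M. T$$(i,j) * q j)^2) \<le> l^2 * (\<Sum>j<M. (q j)^2)"
    using eig_exists[OF M1 Tc Tsym] by blast
  have Sbound: "nsq (cm Sk *\<^sub>v x) \<le> l^2 * nsq x" if "x \<in> carrier_vec N" for x
    using Sk_bound[OF Tc rb] that by (simp add: Sk_def N_def)
  define sg where "sg l = sqrt (((\<omega> - 1)^2 + l^2) / ((\<omega> + 1)^2 + l^2))" for l :: real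
  have sigdef: "sigma T \<omega> = Max (sg ` spectrum_real T)" by (simp add: sigma_def sg_def)
  have fin: "finite (sg ` spectrum_real T)" using fin_spec[OF Tc] by simp
  have sg_le: "sg l \<le> sigma T \<omega>" unfolding sigdef using fin lspec by (intro Max_ge) auto
  have sg_lt: "sg l' < 1" for l'
  proof -
    have den: "(\<omega> + 1)^2 + l'^2 > 0" using w by (smt (verit) zero_le_power2 zero_less_power2)
    have "(\<omega> - 1)^2 < (\<omega> + 1)^2" using w by (simp add: power2_eq_square algebra_simps)
    then have "((\<omega> - 1)^2 + l'^2) / ((\<omega> + 1)^2 + l'^2) < 1" using den by simp
    then show ?thesis by (simp add: sg_def)
  qed
  have sig_lt: "sigma T \<omega> < 1"
  proof -
    have "sigma T \<omega> \<in> sg ` spectrum_real T" unfolding sigdef using fin lspec by (intro Max_in) auto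
    then show ?thesis using sg_lt by auto
  qed
  define SX where "SX y = cm Sk *\<^sub>v y" for y
  define DX where "DX y = cm Dk *\<^sub>v y" for y
  define Qv where "Qv y = of_real (\<omega>+1) \<cdot>\<^sub>v y + of_real 1 \<cdot>\<^sub>v SX y" for y
  define Pv where "Pv y = of_real (\<omega>-1) \<cdot>\<^sub>v y + of_real (-1) \<cdot>\<^sub>v SX y" for y
  define Dp where "Dp y = of_real \<omega> \<cdot>\<^sub>v y + of_real 1 \<cdot>\<^sub>v DX y" for y
  define Dm where "Dm y = of_real \<omega> \<cdot>\<^sub>v y + of_real (-1) \<cdot>\<^sub>v DX y" for y
  have SXc[simp]: "SX y \<in> carrier_vec N" for y using Skc by (simp add: SX_def)
  have DXc[simp]: "DX y \<in> carrier_vec N" for y using Dkc by (simp add: DX_def)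
  have Qvc[simp]: "y \<in> carrier_vec N \<Longrightarrow> Qv y \<in> carrier_vec N" for y by (simp add: Qv_def)
  have Pvc[simp]: "y \<in> carrier_vec N \<Longrightarrow> Pv y \<in> carrier_vec N" for y by (simp add: Pv_def)
  have Dpc[simp]: "y \<in> carrier_vec N \<Longrightarrow> Dp y \<in> carrier_vec N" for y by (simp add: Dp_def)
  have Dmc[simp]: "y \<in> carrier_vec N \<Longrightarrow> Dm y \<in> carrier_vec N" for y by (simp add: Dm_def)
  have nQ: "nsq (Qv y) = (\<omega>+1)^2 * nsq y + nsq (SX y)" if "y \<in> carrier_vec N" for y
    using skew_nsq[OF Skc Sk_skew that, of "\<omega>+1" 1] by (simp add: Qv_def SX_def)
  have nP: "nsq (Pv y) = (\<omega>-1)^2 * nsq y + nsq (SX y)" if "y \<in> carrier_vec N" for y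
    using skew_nsq[OF Skc Sk_skew that, of "\<omega>-1" "-1"] by (simp add: Pv_def SX_def)
  have nDp: "nsq (Dp y) = \<omega>^2 * nsq y + nsq (DX y)" if "y \<in> carrier_vec N" for y
    using skew_nsq[OF Dkc Dk_skew that, of "\<omega>" 1] by (simp add: Dp_def DX_def)
  have nDm: "nsq (Dm y) = \<omega>^2 * nsq y + nsq (DX y)" if "y \<in> carrier_vec N" for y
    using skew_nsq[OF Dkc Dk_skew that, of "\<omega>" "-1"] by (simp add: Dm_def DX_def)
  have hT: "\<omega> \<cdot>\<^sub>m 1\<^sub>m N + blkT M T = (\<omega>+1) \<cdot>\<^sub>m 1\<^sub>m N + Sk"
    by (rule eq_matI) (use Tc in \<open>auto simp: blkT_def Sk_def N_def\<close>)
  have hR: "blkR M T D = 1 \<cdot>\<^sub>m 1\<^sub>m N + (Sk + Dk)"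
    by (rule eq_matI) (use Tc Dc in \<open>auto simp: blkR_def Sk_def Dk_def blkD_def N_def\<close>)
  define Qm where "Qm = (\<omega>+1) \<cdot>\<^sub>m 1\<^sub>m N + Sk"
  define Dpm where "Dpm = \<omega> \<cdot>\<^sub>m 1\<^sub>m N + Dk"
  have Qmc: "Qm \<in> carrier_mat N N" using Skc by (simp add: Qm_def)
  have Dpmc: "Dpm \<in> carrier_mat N N" using Dkc by (simp add: Dpm_def)
  have hF: "NASS M T D \<omega> = (1/(2*\<omega>)) \<cdot>\<^sub>m (Qm * Dpm)"
    unfolding NASS_def N2 hT Qm_def Dpm_def Dk_def ..
  have Fc: "NASS M T D \<omega> \<in> carrier_mat N N" using Qmc Dpmc by (simp add: hF)
  have Qm_apply: "cm Qm *\<^sub>v y = Qv y" if "y \<in> carrier_vec N" for y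
    unfolding Qm_def Qv_def SX_def using cm_aI[OF Skc that] .
  have Dpm_apply: "cm Dpm *\<^sub>v y = Dp y" if "y \<in> carrier_vec N" for y
    unfolding Dpm_def Dp_def DX_def using cm_aI[OF Dkc that] .
  have F_apply: "cm (NASS M T D \<omega>) *\<^sub>v x = of_real (1/(2*\<omega>)) \<cdot>\<^sub>v Qv (Dp x)"
    if x: "x \<in> carrier_vec N" for x
  proof -
    have "cm (NASS M T D \<omega>) *\<^sub>v x = of_real (1/(2*\<omega>)) \<cdot>\<^sub>v (cm (Qm * Dpm) *\<^sub>v x)"
      unfolding hF using cm_smult_mv[of "Qm * Dpm" N N x] Qmc Dpmc x by simp
    also have "cm (Qm * Dpm) = cm Qm * cm Dpm" using of_real_hom.mat_hom_mult[OF Qmc Dpmc] .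
    also have "(cm Qm * cm Dpm) *\<^sub>v x = cm Qm *\<^sub>v (cm Dpm *\<^sub>v x)"
      using Qmc Dpmc x by (intro assoc_mult_mat_vec[of _ N N _ N]) auto
    also have "\<dots> = Qv (Dp x)" using x Dpmc by (simp add: Dpm_apply Qm_apply)
    finally show ?thesis .
  qed
  have R_apply: "cm (blkR M T D) *\<^sub>v x = of_real 1 \<cdot>\<^sub>v x + of_real 1 \<cdot>\<^sub>v (SX x + DX x)"
    if x: "x \<in> carrier_vec N" for x
  proof -
    have SD: "Sk + Dk \<in> carrier_mat N N" using Skc Dkc by simp
    have "cm (Sk + Dk) = cm Sk + cm Dk" by (rule eq_matI) (use Skc Dkc in auto)
    then have "cm (Sk + Dk) *\<^sub>v x = SX x + DX x"
      using Skc Dkc x by (simp add: SX_def DX_def add_mult_distrib_mat_vec[of _ N N])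
    then show ?thesis unfolding hR using cm_aI[OF SD x, of 1] by simp
  qed
  have Q_inj0: "y = 0\<^sub>v N" if y: "y \<in> carrier_vec N" and q: "nsq (Qv y) = 0" for y
  proof -
    have "(\<omega>+1)^2 * nsq y = 0" using nQ[OF y] q nsq_nonneg[of "SX y"] nsq_nonneg[of y] w
      by (smt (verit) mult_nonneg_nonneg zero_le_power2)
    then have "nsq y = 0" using w by simp
    then show ?thesis using nsq_zero y by blast
  qed
  have D_inj0: "y = 0\<^sub>v N" if y: "y \<in> carrier_vec N" and q: "nsq (Dp y) = 0" for y
  proof -
    have "\<omega>^2 * nsq y = 0" using nDp[OF y] q nsq_nonneg[of "DX y"] nsq_nonneg[of y] w
      by (smt (verit) mult_nonneg_nonneg zero_le_power2)
    then have "nsq y = 0" using w by simp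
    then show ?thesis using nsq_zero y by blast
  qed
  have F_inj: "x = 0\<^sub>v N" if x: "x \<in> carrier_vec N" and Fx: "NASS M T D \<omega> *\<^sub>v x = 0\<^sub>v N" for x
  proof -
    define xc where "xc = map_vec complex_of_real x"
    have xc: "xc \<in> carrier_vec N" using x by (simp add: xc_def)
    have "cm (NASS M T D \<omega>) *\<^sub>v xc = map_vec complex_of_real (NASS M T D \<omega> *\<^sub>v x)"
      unfolding xc_def using of_real_hom.mult_mat_vec_hom[OF Fc x] by (rule sym)
    also have "\<dots> = 0\<^sub>v N" using Fx by simp
    finally have "of_real (1/(2*\<omega>)) \<cdot>\<^sub>v Qv (Dp xc) = 0\<^sub>v N" using F_apply[OF xc] by simp
    then have "nsq (of_real (1/(2*\<omega>)) \<cdot>\<^sub>v Qv (Dp xc)) = 0" by (simp add: nsq_def)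
    then have "nsq (Qv (Dp xc)) = 0" using w by (simp add: nsq_smult)
    then have "Dp xc = 0\<^sub>v N" using Q_inj0 xc by simp
    then have "nsq (Dp xc) = 0" by (simp add: nsq_def)
    then have "xc = 0\<^sub>v N" using D_inj0 xc by simp
    then have xc0: "xc = 0\<^sub>v N" .
    show ?thesis
    proof (rule eq_vecI)
      fix i assume i: "i < dim_vec (0\<^sub>v N :: real Matrix.vec)"
      then have "xc $ i = 0" using xc0 by simp
      then show "x$i = 0\<^sub>v N $ i" using i x by (simp add: xc_def)
    qed (use x in simp)
  qed
  obtain Fi where Fi: "Fi \<in> carrier_mat N N" "NASS M T D \<omega> * Fi = 1\<^sub>m N" "Fi * NASS M T D \<omega> = 1\<^sub>m N"
    using inv_exists[OF Fc F_inj] by blast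
  define G where "G = mat_inv N (NASS M T D \<omega>)"
  have G: "G \<in> carrier_mat N N" "NASS M T D \<omega> * G = 1\<^sub>m N"
    using someI[of "\<lambda>B. B \<in> carrier_mat N N \<and> NASS M T D \<omega> * B = 1\<^sub>m N \<and> B * NASS M T D \<omega> = 1\<^sub>m N", OF conjI[OF Fi(1) conjI[OF Fi(2) Fi(3)]]]
    unfolding G_def mat_inv_def by auto
  obtain Qi where Qi: "Qi \<in> carrier_mat N N" "cm Qm * Qi = 1\<^sub>m N" "Qi * cm Qm = 1\<^sub>m N"
  proof -
    have "\<exists>B. B \<in> carrier_mat N N \<and> cm Qm * B = 1\<^sub>m N \<and> B * cm Qm = 1\<^sub>m N"
    proof (rule inv_exists)
      show "cm Qm \<in> carrier_mat N N" using Qmc by simp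
      fix y assume y: "y \<in> carrier_vec N" and "cm Qm *\<^sub>v y = 0\<^sub>v N"
      then have "Qv y = 0\<^sub>v N" using Qm_apply by simp
      then have "nsq (Qv y) = 0" by (simp add: nsq_def)
      then show "y = 0\<^sub>v N" using Q_inj0 y by simp
    qed
    then show ?thesis using that by blast
  qed
  have Q_inj: "y1 = y2" if "y1 \<in> carrier_vec N" "y2 \<in> carrier_vec N" "Qv y1 = Qv y2" for y1 y2
  proof -
    have "Qi *\<^sub>v (cm Qm *\<^sub>v y1) = Qi *\<^sub>v (cm Qm *\<^sub>v y2)" using that Qm_apply by simp
    moreover have "(Qi * cm Qm) *\<^sub>v y1 = Qi *\<^sub>v (cm Qm *\<^sub>v y1)"
      using that Qi Qmc by (intro assoc_mult_mat_vec[of _ N N _ N]) auto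
    moreover have "(Qi * cm Qm) *\<^sub>v y2 = Qi *\<^sub>v (cm Qm *\<^sub>v y2)"
      using that Qi Qmc by (intro assoc_mult_mat_vec[of _ N N _ N]) auto
    ultimately have "(Qi * cm Qm) *\<^sub>v y1 = (Qi * cm Qm) *\<^sub>v y2" by simp
    then show ?thesis using Qi that by simp
  qed
  let ?R = "blkR M T D"
  have Rc: "?R \<in> carrier_mat N N" using Tc Dc by (simp add: blkR_def N_def)
  from eig obtain v where ev: "eigenvector (cm (G * ?R)) v \<eta>"
    unfolding eigenvalue_def N2 G_def[symmetric] by blast
  have GR: "cm (G * ?R) = cm G * cm ?R" using of_real_hom.mat_hom_mult[OF G(1) Rc] .
  have v: "v \<in> carrier_vec N" and vne: "v \<noteq> 0\<^sub>v N" and vev: "cm (G * ?R) *\<^sub>v v = \<eta> \<cdot>\<^sub>v v"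
    using ev G(1) Rc unfolding eigenvector_def by auto
  define u where "u = cm ?R *\<^sub>v v"
  have uc: "u \<in> carrier_vec N" using Rc by (simp add: u_def)
  have Gu: "cm G *\<^sub>v u = \<eta> \<cdot>\<^sub>v v"
  proof -
    have "cm (G * ?R) *\<^sub>v v = cm G *\<^sub>v (cm ?R *\<^sub>v v)"
      unfolding GR using G(1) Rc v by (intro assoc_mult_mat_vec[of _ N N _ N]) auto
    then show ?thesis using vev by (simp add: u_def)
  qed
  have "u = cm (NASS M T D \<omega>) *\<^sub>v (cm G *\<^sub>v u)"
  proof -
    have "cm (NASS M T D \<omega>) *\<^sub>v (cm G *\<^sub>v u) = (cm (NASS M T D \<omega>) * cm G) *\<^sub>v u"
      using Fc G(1) uc by (intro assoc_mult_mat_vec[of _ N N _ N, symmetric]) auto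
    also have "cm (NASS M T D \<omega>) * cm G = cm (NASS M T D \<omega> * G)"
      using of_real_hom.mat_hom_mult[OF Fc G(1)] by (rule sym)
    also have "\<dots> = 1\<^sub>m N" using G(2) by (simp add: of_real_hom.mat_hom_one)
    finally show ?thesis using uc by simp
  qed
  also have "\<dots> = \<eta> \<cdot>\<^sub>v (cm (NASS M T D \<omega>) *\<^sub>v v)" unfolding Gu using Fc v by (intro mult_mat_vec[of _ N N]) auto
  also have "\<dots> = \<eta> \<cdot>\<^sub>v (of_real (1/(2*\<omega>)) \<cdot>\<^sub>v Qv (Dp v))" unfolding F_apply[OF v] ..
  finally have u_eq: "u = \<eta> \<cdot>\<^sub>v (of_real (1/(2*\<omega>)) \<cdot>\<^sub>v Qv (Dp v))" .
  have SXlin: "SX (a \<cdot>\<^sub>v x + b \<cdot>\<^sub>v y) = a \<cdot>\<^sub>v SX x + b \<cdot>\<^sub>v SX y"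
    if "x \<in> carrier_vec N" "y \<in> carrier_vec N" for a b x y
    unfolding SX_def using cmv_lin[OF Skc that] .
  have SXsm: "SX (a \<cdot>\<^sub>v x) = a \<cdot>\<^sub>v SX x" if "x \<in> carrier_vec N" for a x
    unfolding SX_def using cmv_smult[OF Skc that] .
  have dimv: "dim_vec v = N" using v by (rule carrier_vecD)
  have dSX: "dim_vec (SX y) = N" for y by (rule carrier_vecD[OF SXc])
  have dDX: "dim_vec (DX y) = N" for y by (rule carrier_vecD[OF DXc])
  have DXvc: "DX v \<in> carrier_vec N" by simp
  have E1: "Qv (Dp v) = of_real (\<omega>+1) \<cdot>\<^sub>v (of_real \<omega> \<cdot>\<^sub>v v + of_real 1 \<cdot>\<^sub>v DX v)
       + of_real 1 \<cdot>\<^sub>v (of_real \<omega> \<cdot>\<^sub>v SX v + of_real 1 \<cdot>\<^sub>v SX (DX v))"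
    unfolding Qv_def Dp_def SXlin[OF v DXvc] ..
  have E2: "Pv (Dm v) = of_real (\<omega>-1) \<cdot>\<^sub>v (of_real \<omega> \<cdot>\<^sub>v v + of_real (-1) \<cdot>\<^sub>v DX v)
       + of_real (-1) \<cdot>\<^sub>v (of_real \<omega> \<cdot>\<^sub>v SX v + of_real (-1) \<cdot>\<^sub>v SX (DX v))"
    unfolding Pv_def Dm_def SXlin[OF v DXvc] ..
  have Ru: "u = of_real 1 \<cdot>\<^sub>v v + of_real 1 \<cdot>\<^sub>v (SX v + DX v)"
    unfolding u_def using R_apply[OF v] .
  have UU: "of_real 1 \<cdot>\<^sub>v v + of_real 1 \<cdot>\<^sub>v (SX v + DX v) = \<eta> \<cdot>\<^sub>v (of_real (1/(2*\<omega>)) \<cdot>\<^sub>v Qv (Dp v))"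
    using Ru u_eq by simp
  have w0: "complex_of_real \<omega> \<noteq> 0" using w by simp
  have dQ: "dim_vec (Qv (Dp v)) = N" unfolding E1 by (simp add: dimv dSX dDX)
  have key: "Pv (Dm v) = (1 - \<eta>) \<cdot>\<^sub>v Qv (Dp v)"
  proof (rule eq_vecI)
    fix i assume "i < dim_vec ((1 - \<eta>) \<cdot>\<^sub>v Qv (Dp v))"
    then have i: "i < N" unfolding E1 by (simp add: dimv dSX dDX)
    define p where "p = v$i"
    define sv where "sv = SX v $ i"
    define d where "d = DX v $ i"
    define t where "t = SX (DX v) $ i"
    define W where "W = complex_of_real \<omega>"
    have WW: "W \<noteq> 0" using w0 by (simp add: W_def)
    define Q where "Q = (W+1) * (W * p + d) + (W * sv + t)"
    have Qi: "Qv (Dp v) $ i = Q"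
      unfolding E1 Q_def p_def sv_def d_def t_def W_def using i by (simp add: dimv dSX dDX)
    have Pi: "Pv (Dm v) $ i = (W-1) * (W * p - d) - (W * sv - t)"
      unfolding E2 p_def sv_def d_def t_def W_def using i by (simp add: dimv dSX dDX)
    have c1: "p + (sv + d) = \<eta> * (1 / (2 * W) * Q)"
      using arg_cong[OF UU, of "\<lambda>x. x $ i"] i
      unfolding E1 Q_def p_def sv_def d_def t_def W_def by (simp add: dimv dSX dDX)
    then have c2: "\<eta> * Q = 2 * W * (p + (sv + d))" using WW by (simp add: field_simps)
    have "(W-1) * (W * p - d) - (W * sv - t) = Q - 2 * W * (p + (sv + d))"
      unfolding Q_def by (simp add: algebra_simps)
    also have "\<dots> = (1 - \<eta>) * Q" using c2 by (simp add: algebra_simps)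
    finally show "(Pv (Dm v)) $ i = ((1 - \<eta>) \<cdot>\<^sub>v Qv (Dp v)) $ i"
      using Pi Qi i dQ by simp
  qed (unfold E1 E2, simp add: dimv dSX dDX)
  define a where "a = Dm v"
  define b where "b = Dp v"
  define \<mu> where "\<mu> = 1 - \<eta>"
  have ac: "a \<in> carrier_vec N" and bc: "b \<in> carrier_vec N" using v by (auto simp: a_def b_def)
  define c where "c = Qi *\<^sub>v a"
  have cc: "c \<in> carrier_vec N" unfolding c_def using Qi(1) ac by (rule mult_mat_vec_carrier)
  have Qc: "Qv c = a"
  proof -
    have "Qv c = cm Qm *\<^sub>v (Qi *\<^sub>v a)" using Qm_apply cc by (simp add: c_def)
    also have "\<dots> = (cm Qm * Qi) *\<^sub>v a" using Qmc Qi ac by (intro assoc_mult_mat_vec[of _ N N _ N, symmetric]) auto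
    also have "\<dots> = a" using Qi(2) ac by simp
    finally show ?thesis .
  qed
  have comm: "Pv (Qv y) = Qv (Pv y)" if y: "y \<in> carrier_vec N" for y
  proof -
    have yd: "dim_vec y = N" using y by (rule carrier_vecD)
    have SQ: "SX (Qv y) = of_real (\<omega>+1) \<cdot>\<^sub>v SX y + of_real 1 \<cdot>\<^sub>v SX (SX y)"
      unfolding Qv_def using SXlin[OF y SXc] .
    have SP: "SX (Pv y) = of_real (\<omega>-1) \<cdot>\<^sub>v SX y + of_real (-1) \<cdot>\<^sub>v SX (SX y)"
      unfolding Pv_def using SXlin[OF y SXc] .
    show ?thesis
    proof (rule eq_vecI)
      fix i assume "i < dim_vec (Qv (Pv y))"
      then have i: "i < N" unfolding Qv_def by (simp add: dSX)
      define W where "W = complex_of_real \<omega>"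
      define p where "p = y $ i"
      define s where "s = SX y $ i"
      define t where "t = SX (SX y) $ i"
      have L: "Pv (Qv y) $ i = (W-1) * ((W+1) * p + s) - ((W+1) * s + t)"
        unfolding Pv_def SQ unfolding Qv_def W_def p_def s_def t_def using i yd by (simp add: dSX)
      have R: "Qv (Pv y) $ i = (W+1) * ((W-1) * p - s) + ((W-1) * s - t)"
        unfolding Qv_def SP unfolding Pv_def W_def p_def s_def t_def using i yd by (simp add: dSX)
      show "Pv (Qv y) $ i = Qv (Pv y) $ i" unfolding L R by (simp add: algebra_simps)
    qed (simp add: Pv_def Qv_def dSX)
  qed
  have Qsm: "Qv (\<mu> \<cdot>\<^sub>v b) = \<mu> \<cdot>\<^sub>v Qv b"
  proof -
    have bd: "dim_vec b = N" using bc by (rule carrier_vecD)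
    show ?thesis
    proof (rule eq_vecI)
      fix i assume "i < dim_vec (\<mu> \<cdot>\<^sub>v Qv b)"
      then have i: "i < N" unfolding Qv_def by (simp add: dSX)
      show "Qv (\<mu> \<cdot>\<^sub>v b) $ i = (\<mu> \<cdot>\<^sub>v Qv b) $ i"
        unfolding Qv_def SXsm[OF bc] using i bd by (simp add: dSX algebra_simps)
    qed (simp add: Qv_def dSX)
  qed
  have "Qv (Pv c) = Qv (\<mu> \<cdot>\<^sub>v b)"
    using comm[OF cc] Qc key Qsm by (simp add: a_def b_def \<mu>_def)
  then have Pc: "Pv c = \<mu> \<cdot>\<^sub>v b" using Q_inj cc bc by simp
  define n where "n = nsq c"
  define s where "s = nsq (SX c)"
  have nb: "nsq b = (\<omega>+1)^2 * n + s"
  proof -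
    have "nsq b = nsq a" using nDp[OF v] nDm[OF v] by (simp add: a_def b_def)
    also have "\<dots> = (\<omega>+1)^2 * n + s" using nQ[OF cc] Qc by (simp add: n_def s_def)
    finally show ?thesis .
  qed
  have eqm: "(cmod \<mu>)^2 * nsq b = (\<omega>-1)^2 * n + s"
    using nP[OF cc] Pc by (simp add: nsq_smult n_def s_def)
  have vpos: "nsq v > 0"
  proof -
    have "nsq v \<noteq> 0" using nsq_zero[OF v] vne by blast
    then show ?thesis using nsq_nonneg[of v] by linarith
  qed
  have bpos: "nsq b > 0"
  proof -
    have "nsq b \<ge> \<omega>^2 * nsq v" using nDp[OF v] nsq_nonneg[of "DX v"] by (simp add: b_def)
    moreover have "\<omega>^2 * nsq v > 0" using w vpos by simp
    ultimately show ?thesis by linarith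
  qed
  have sb: "s \<le> l^2 * n" using Sbound[OF cc] by (simp add: s_def n_def SX_def)
  have m2: "(cmod \<mu>)^2 \<le> ((\<omega>-1)^2 + l^2) / ((\<omega>+1)^2 + l^2)"
    by (rule final_arith[OF w _ _ sb]) (use nsq_nonneg bpos nb eqm in \<open>auto simp: n_def s_def\<close>)
  have "cmod \<mu> \<le> sg l"
  proof -
    have "sqrt ((cmod \<mu>)^2) \<le> sg l" unfolding sg_def using m2 by (rule real_sqrt_le_mono)
    then show ?thesis by simp
  qed
  moreover have "cmod (\<eta> - 1) = cmod \<mu>" by (simp add: \<mu>_def norm_minus_commute)
  ultimately show ?thesis using sg_le sig_lt by simp
qed


end
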